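(* Let $n\ge 3$ and $\gamma>0$, and let $\pi$ be a random permutation of $[n]=\{1,\dots,n\}$ distributed according to the Hamming prior $p(\pi)\propto\exp(-\gamma\, d_{\mathsf{H}}(\pi,\mathrm{id}))$. Then for all integers $2\le k<n$: (i) if $\gamma\ge(1+\delta)\log n$ for some $\delta>0$, then $\mathbb{P}\big(d_{\mathsf{H}}(\pi,\mathrm{id})\ge k\big)\le\exp(-k\delta\log n)$; (ii) if $\gamma\le\log(n-k)$, then $\mathbb{P}\big(d_{\mathsf{H}}(\pi,\mathrm{id})\ge k\big)\ge c(k,n)$, where $c(k,n)$ are quantities satisfying $c(k,n)\to\frac14\,\frac{!k}{k!}$ as $n\to\infty$.
   Context: $\mathrm{id}$ is the identity permutation and $d_{\mathsf{H}}(\pi,\mathrm{id})=\sum_{i=1}^n\mathbb{I}(\pi(i)\neq i)$ is the number of non-fixed points of $\pi$. $!k$ denotes the number of derangements of $k$ elements, i.e., the number of permutations of $\{1,\dots,k\}$ without fixed points. *)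

theory Defs
  imports Complex_Main "HOL-Combinatorics.Permutations"
begin

definition hamming_id :: "nat \<Rightarrow> (nat \<Rightarrow> nat) \<Rightarrow> nat" where
  "hamming_id n \<pi> = card {i \<in> {1..n}. \<pi> i \<noteq> i}"

definition hamming_tail_prob :: "nat \<Rightarrow> real \<Rightarrow> nat \<Rightarrow> real" where
  "hamming_tail_prob n \<gamma> k =
     (\<Sum>\<pi> \<in> {\<pi>. \<pi> permutes {1..n} \<and> hamming_id n \<pi> \<ge> k}. exp (- \<gamma> * real (hamming_id n \<pi>)))
     / (\<Sum>\<pi> \<in> {\<pi>. \<pi> permutes {1..n}}. exp (- \<gamma> * real (hamming_id n \<pi>)))"

definition derangements_count :: "nat \<Rightarrow> nat" where
  "derangements_count k = card {p. p permutes {1..k} \<and> (\<forall>i \<in> {1..k}. p i \<noteq> i)}"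

end

theory Submission
  imports Defs
begin


lemma w_expand:
  fixes x :: real
  assumes p: "\<pi> permutes {1..n}"
  shows "x ^ hamming_id n \<pi> = (\<Sum>X\<in>Pow {1..n}. x ^ card X * (1-x)^(n - card X) * (if \<pi> permutes X then 1 else 0))"
proof -
  let ?A = "{1..n}"
  have "x ^ hamming_id n \<pi> = (\<Prod>i\<in>?A. if \<pi> i = i then 1 else x)"
  proof -
    have "(\<Prod>i\<in>?A. if \<pi> i = i then 1 else x) = (\<Prod>i\<in>?A \<inter> {i. \<pi> i = i}. 1) * (\<Prod>i\<in>?A - {i. \<pi> i = i}. x)"
      by (subst prod.If_cases) (auto simp: Diff_eq)
    also have "\<dots> = x ^ card (?A - {i. \<pi> i = i})" by simp
    also have "?A - {i. \<pi> i = i} = {i\<in>?A. \<pi> i \<noteq> i}" by auto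
    finally show ?thesis unfolding hamming_id_def by simp
  qed
  also have "\<dots> = (\<Prod>i\<in>?A. x + (if \<pi> i = i then 1 - x else 0))"
    by (rule prod.cong) auto
  also have "\<dots> = (\<Sum>X\<in>Pow ?A. (\<Prod>i\<in>X. x) * (\<Prod>i\<in>?A-X. (if \<pi> i = i then 1 - x else 0)))"
    by (rule prod_add) simp
  also have "\<dots> = (\<Sum>X\<in>Pow ?A. x ^ card X * (1-x)^(n - card X) * (if \<pi> permutes X then 1 else 0))"
  proof (rule sum.cong[OF refl])
    fix X assume X: "X \<in> Pow ?A"
    have cX: "card (?A - X) = n - card X" using X by (simp add: card_Diff_subset finite_subset)
    show "(\<Prod>i\<in>X. x) * (\<Prod>i\<in>?A-X. (if \<pi> i = i then 1 - x else 0)) = x ^ card X * (1-x)^(n - card X) * (if \<pi> permutes X then 1 else 0)"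
    proof (cases "\<pi> permutes X")
      case True
      then have "\<forall>i\<in>?A-X. \<pi> i = i" by (auto simp: permutes_not_in)
      then have "(\<Prod>i\<in>?A-X. (if \<pi> i = i then 1 - x else 0)) = (\<Prod>i\<in>?A-X. 1 - x)"
        by (intro prod.cong) auto
      then show ?thesis using True cX by simp
    next
      case False
      then obtain i where "i \<in> ?A - X" "\<pi> i \<noteq> i" using permutes_superset[OF p, of X] by auto
      then have "(\<Prod>i\<in>?A-X. (if \<pi> i = i then 1 - x else 0)) = 0"
        by (intro prod_zero) auto
      then show ?thesis using False by simp
    qed
  qed
  finally show ?thesis .
qed


lemma decomp:
  fixes x :: real
  shows "(\<Sum>\<pi>\<in>{\<pi>. \<pi> permutes {1..n} \<and> Q \<pi>}. x ^ hamming_id n \<pi>) =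
    (\<Sum>X\<in>Pow {1..n}. x ^ card X * (1-x)^(n - card X) * real (card {\<pi>. \<pi> permutes X \<and> Q \<pi>}))"
proof -
  let ?S = "{\<pi>. \<pi> permutes {1..n} \<and> Q \<pi>}"
  let ?f = "\<lambda>X. x ^ card X * (1-x)^(n - card X)"
  have fin: "finite ?S" by (rule finite_subset[OF _ finite_permutations[of "{1..n::nat}"]]) auto
  have "(\<Sum>\<pi>\<in>?S. x ^ hamming_id n \<pi>) = (\<Sum>\<pi>\<in>?S. \<Sum>X\<in>Pow {1..n}. ?f X * (if \<pi> permutes X then 1 else 0))"
    by (rule sum.cong[OF refl]) (simp add: w_expand)
  also have "\<dots> = (\<Sum>X\<in>Pow {1..n}. \<Sum>\<pi>\<in>?S. ?f X * (if \<pi> permutes X then 1 else 0))"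
    by (rule sum.swap)
  also have "\<dots> = (\<Sum>X\<in>Pow {1..n}. ?f X * real (card {\<pi>. \<pi> permutes X \<and> Q \<pi>}))"
  proof (rule sum.cong[OF refl])
    fix X assume X: "X \<in> Pow {1..n}"
    have eq: "{\<pi>\<in>?S. \<pi> permutes X} = {\<pi>. \<pi> permutes X \<and> Q \<pi>}"
      using X by (auto intro: permutes_subset)
    have "(\<Sum>\<pi>\<in>?S. ?f X * (if \<pi> permutes X then 1 else 0)) = ?f X * (\<Sum>\<pi>\<in>?S. (if \<pi> permutes X then 1 else 0))"
      by (simp add: sum_distrib_left)
    also have "(\<Sum>\<pi>\<in>?S. (if \<pi> permutes X then 1 else 0)) = (\<Sum>\<pi>\<in>{\<pi>\<in>?S. \<pi> permutes X}. (1::real))"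
      by (rule sum.inter_filter[OF fin, symmetric])
    also have "\<dots> = real (card {\<pi>. \<pi> permutes X \<and> Q \<pi>})" by (simp only: eq) simp
    finally show "(\<Sum>\<pi>\<in>?S. ?f X * (if \<pi> permutes X then 1 else 0)) = ?f X * real (card {\<pi>. \<pi> permutes X \<and> Q \<pi>})" .
  qed
  finally show ?thesis .
qed

lemma sum_Pow_card:
  fixes g :: "nat \<Rightarrow> real"
  assumes "finite A"
  shows "(\<Sum>X\<in>Pow A. g (card X)) = (\<Sum>m\<le>card A. real (card A choose m) * g m)"
proof -
  have "(\<Sum>X\<in>Pow A. g (card X)) = (\<Sum>m\<le>card A. \<Sum>X\<in>{X. X \<in> Pow A \<and> card X = m}. g (card X))"
    by (rule sum.group[symmetric]) (use assms in \<open>auto intro: card_mono\<close>)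
  also have "\<dots> = (\<Sum>m\<le>card A. real (card A choose m) * g m)"
  proof (rule sum.cong[OF refl])
    fix m
    have "(\<Sum>X\<in>{X. X \<in> Pow A \<and> card X = m}. g (card X)) = (\<Sum>X\<in>{X. X \<subseteq> A \<and> card X = m}. g m)"
      by (rule sum.cong) auto
    also have "\<dots> = real (card A choose m) * g m" using n_subsets[OF assms] by simp
    finally show "(\<Sum>X\<in>{X. X \<in> Pow A \<and> card X = m}. g (card X)) = real (card A choose m) * g m" .
  qed
  finally show ?thesis .
qed



definition ee :: "nat \<Rightarrow> real \<Rightarrow> nat \<Rightarrow> real" where
  "ee n x m = real (n choose m) * fact m * x^m * (1-x)^(n-m)"

lemma binom_step: "m < n \<Longrightarrow> (n choose Suc m) * Suc m = (n choose m) * (n - m)"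
proof -
  assume "m < n"
  then obtain n' where n: "n = Suc n'" by (cases n) auto
  have "(n choose Suc m) * Suc m = n * (n' choose m)" using Suc_times_binomial[of m n'] n by (simp add: mult.commute)
  also have "\<dots> = (n - m) * (n choose m)" using binomial_absorb_comp[of n m] n by simp
  finally show ?thesis by simp
qed

lemma ee_nonneg: "0 \<le> x \<Longrightarrow> x \<le> 1 \<Longrightarrow> 0 \<le> ee n x m"
  unfolding ee_def by simp

lemma ee_step:
  assumes "m < n"
  shows "ee n x (Suc m) * (1 - x) = ee n x m * (real n - real m) * x"
proof -
  have b: "real (n choose Suc m) * real (Suc m) = real (n choose m) * (real n - real m)"
    using binom_step[OF assms] assms by (metis of_nat_diff of_nat_mult less_imp_le)
  have p: "(1-x)^(n - m) = (1-x)^(n - Suc m) * (1 - x)"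
    using assms by (metis Suc_diff_Suc power_Suc2)
  have "ee n x (Suc m) * (1 - x) = (real (n choose Suc m) * real (Suc m)) * fact m * x^Suc m * ((1-x)^(n-Suc m) * (1-x))"
    unfolding ee_def by (simp add: algebra_simps)
  also have "\<dots> = ee n x m * (real n - real m) * x"
    unfolding ee_def b p[symmetric] by (simp add: algebra_simps)
  finally show ?thesis .
qed

lemma shift_ineq:
  fixes f :: "nat \<Rightarrow> real"
  assumes "\<And>m. j \<le> m \<Longrightarrow> m < n \<Longrightarrow> f (Suc m) * c \<le> f m * d"
  shows "(\<Sum>m\<in>{Suc j..<Suc n}. f m) * c \<le> (\<Sum>m\<in>{j..<n}. f m) * d"
proof -
  have "(\<Sum>m\<in>{Suc j..<Suc n}. f m) = (\<Sum>m\<in>{j..<n}. f (Suc m))"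
    by (rule sum.shift_bounds_Suc_ivl)
  then have "(\<Sum>m\<in>{Suc j..<Suc n}. f m) * c = (\<Sum>m\<in>{j..<n}. f (Suc m) * c)"
    by (simp add: sum_distrib_right)
  also have "\<dots> \<le> (\<Sum>m\<in>{j..<n}. f m * d)" by (rule sum_mono) (use assms in auto)
  also have "\<dots> = (\<Sum>m\<in>{j..<n}. f m) * d" by (simp add: sum_distrib_right)
  finally show ?thesis .
qed

lemma tail_i:
  assumes x0: "0 < x" and x1: "x < 1" and nx: "real n * x \<le> \<epsilon>" and e1: "\<epsilon> < 1" and k: "1 \<le> k" and n: "1 \<le> n"
  shows "(\<Sum>m\<in>{k..<Suc n}. ee n x m) \<le> \<epsilon>^k * (\<Sum>m\<in>{0..<Suc n}. ee n x m)"
proof -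
  define E where "E j = (\<Sum>m\<in>{j..<Suc n}. ee n x m)" for j
  have nn: "0 \<le> ee n x m" for m using ee_nonneg x0 x1 by simp
  have Enn: "0 \<le> E j" for j unfolding E_def by (rule sum_nonneg) (simp add: nn)
  have e0: "0 \<le> \<epsilon>" using nx x0 by (smt (verit) mult_nonneg_nonneg of_nat_0_le_iff)
  have ex: "\<epsilon> * x \<le> 1 * x" using e1 x0 by (intro mult_right_mono) auto
  have n1x: "(real n - 1) * x \<le> \<epsilon> * (1 - x)" using nx ex by (simp add: algebra_simps)
  have stepA: "E (Suc j) \<le> \<epsilon> * E j" if j: "1 \<le> j" for j
  proof -
    have "E (Suc j) * (1 - x) \<le> (\<Sum>m\<in>{j..<n}. ee n x m) * (\<epsilon> * (1 - x))"
      unfolding E_def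
    proof (rule shift_ineq)
      fix m assume m: "j \<le> m" "m < n"
      have "ee n x (Suc m) * (1 - x) = ee n x m * ((real n - real m) * x)" using ee_step[OF m(2)] by simp
      also have "\<dots> \<le> ee n x m * (\<epsilon> * (1 - x))"
      proof (rule mult_left_mono[OF _ nn])
        have "(real n - real m) * x \<le> (real n - 1) * x" using m j x0 by (intro mult_right_mono) auto
        then show "(real n - real m) * x \<le> \<epsilon> * (1 - x)" using n1x by linarith
      qed
      finally show "ee n x (Suc m) * (1 - x) \<le> ee n x m * (\<epsilon> * (1 - x))" .
    qed
    also have "(\<Sum>m\<in>{j..<n}. ee n x m) \<le> E j" unfolding E_def
      by (rule sum_mono2) (auto simp: nn)
    then have "(\<Sum>m\<in>{j..<n}. ee n x m) * (\<epsilon> * (1 - x)) \<le> E j * (\<epsilon> * (1 - x))"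
      using e0 x1 by (intro mult_right_mono) auto
    finally have "E (Suc j) * (1 - x) \<le> (\<epsilon> * E j) * (1 - x)" by (simp add: algebra_simps)
    then show ?thesis using x1 by simp
  qed
  have stepB: "E 1 \<le> \<epsilon> * E 0"
  proof -
    have E0: "E 0 = ee n x 0 + E 1" unfolding E_def by (simp add: sum.atLeast_Suc_lessThan)
    have E1: "E 1 = ee n x 1 + E 2" unfolding E_def numeral_2_eq_2 using n by (subst sum.atLeast_Suc_lessThan) auto
    have e1: "ee n x 1 * (1 - x) = ee n x 0 * (real n * x)" using ee_step[of 0 n x] n by simp
    have E2: "E 2 * (1 - x) \<le> (\<Sum>m\<in>{Suc 0..<n}. ee n x m) * ((real n - 1) * x)"
      unfolding E_def numeral_2_eq_2
    proof (rule shift_ineq)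
      fix m assume m: "Suc 0 \<le> m" "m < n"
      have "ee n x (Suc m) * (1 - x) = ee n x m * ((real n - real m) * x)" using ee_step[OF m(2)] by simp
      also have "\<dots> \<le> ee n x m * ((real n - 1) * x)"
        using m x0 by (intro mult_left_mono[OF _ nn] mult_right_mono) auto
      finally show "ee n x (Suc m) * (1 - x) \<le> ee n x m * ((real n - 1) * x)" .
    qed
    have "(\<Sum>m\<in>{Suc 0..<n}. ee n x m) \<le> E 1" unfolding E_def
      by (rule sum_mono2) (auto simp: nn)
    then have "(\<Sum>m\<in>{Suc 0..<n}. ee n x m) * ((real n - 1) * x) \<le> E 1 * ((real n - 1) * x)"
      using n x0 by (intro mult_right_mono) auto
    with E2 have E2': "E 2 * (1 - x) \<le> E 1 * ((real n - 1) * x)" by linarith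
    have F: "E 1 * (1 - real n * x) \<le> ee n x 0 * (real n * x)"
      using E1 e1 E2' by (simp add: algebra_simps)
    have nxp: "0 < real n * x" using n x0 by simp
    have "E 1 * (1 - \<epsilon>) * (real n * x) \<le> \<epsilon> * (E 1 * (1 - real n * x))"
    proof -
      have "(1 - \<epsilon>) * (real n * x) \<le> \<epsilon> * (1 - real n * x)" using nx by (simp add: algebra_simps)
      then have "E 1 * ((1 - \<epsilon>) * (real n * x)) \<le> E 1 * (\<epsilon> * (1 - real n * x))"
        by (rule mult_left_mono) (rule Enn)
      then show ?thesis by (simp add: algebra_simps)
    qed
    also have "\<dots> \<le> \<epsilon> * (ee n x 0 * (real n * x))" using F e0 by (rule mult_left_mono)
    finally have "E 1 * (1 - \<epsilon>) * (real n * x) \<le> (\<epsilon> * ee n x 0) * (real n * x)" by (simp add: algebra_simps)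
    then have "E 1 * (1 - \<epsilon>) \<le> \<epsilon> * ee n x 0" using nxp by (rule mult_right_le_imp_le)
    then show ?thesis using E0 by (simp add: algebra_simps)
  qed
  have "E j \<le> \<epsilon>^j * E 0" if "1 \<le> j" for j
    using that
  proof (induction j rule: dec_induct)
    case base then show ?case using stepB by simp
  next
    case (step j)
    have "E (Suc j) \<le> \<epsilon> * E j" using stepA step by simp
    also have "\<dots> \<le> \<epsilon> * (\<epsilon>^j * E 0)" using step.IH e0 by (rule mult_left_mono)
    finally show ?case by (simp add: algebra_simps)
  qed
  from this[OF k] show ?thesis unfolding E_def .
qed


lemma tail_ii:
  assumes x1: "x < 1" and xk: "1 / (real n - real k) \<le> x" and kn: "k < n" and big: "4 * (k+3)^2 \<le> n"
  shows "(\<Sum>m\<in>{0..<Suc n}. ee n x m * (if k+3 \<le> m then 1/4 else 1)) \<le> 3/4 * (\<Sum>m\<in>{0..<Suc n}. ee n x m)"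
proof -
  define m0 where "m0 = k + 3"
  have nk: "0 < real n - real k" using kn by simp
  have x0: "0 < x" using xk nk by (smt (verit) divide_pos_pos)
  have nn: "0 \<le> ee n x m" for m using ee_nonneg x0 x1 by simp
  have m0sq: "4 * m0 * m0 \<le> n" using big unfolding m0_def power2_eq_square by (metis mult.assoc)
  have m0n: "2 * m0 \<le> n"
  proof -
    have "2 * m0 * 1 \<le> 4 * m0 * m0" unfolding m0_def by (intro mult_le_mono) auto
    then show ?thesis using m0sq by linarith
  qed
  define q where "q = (real n - 2 * real m0) * x"
  have q0: "0 \<le> q" unfolding q_def using m0n x0 by simp
  have grow: "ee n x (m + j) \<ge> ee n x m * q ^ j" if "m + j \<le> 2 * m0" for m j
    using that
  proof (induction j)
    case 0 then show ?case by simp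
  next
    case (Suc j)
    have mj: "m + j < n" using Suc.prems m0n by simp
    have "ee n x m * q ^ Suc j = (ee n x m * q ^ j) * q" by (simp add: algebra_simps)
    also have "\<dots> \<le> ee n x (m + j) * q" using Suc q0 by (intro mult_right_mono) auto
    also have "\<dots> \<le> ee n x (m + j) * ((real n - real (m + j)) * x)"
      unfolding q_def using Suc.prems x0 by (intro mult_left_mono[OF _ nn] mult_right_mono) auto
    also have "\<dots> = ee n x (Suc (m + j)) * (1 - x)" using ee_step[OF mj] by simp
    also have "\<dots> \<le> ee n x (Suc (m + j))" using nn x0 by (simp add: mult_left_le)
    finally show ?case by simp
  qed
  have qhalf: "1/2 \<le> q ^ m0"
  proof -
    have npos: "0 < real n" using kn by simp
    have a: "1 - 2 * real m0 / real n \<le> q"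
    proof -
      have "1 - 2 * real m0 / real n = (real n - 2 * real m0) / real n" using npos by (simp add: field_simps)
      also have "\<dots> \<le> (real n - 2 * real m0) / (real n - real k)"
        using m0n nk by (intro divide_left_mono) auto
      also have "\<dots> = (real n - 2 * real m0) * (1 / (real n - real k))" by simp
      also have "\<dots> \<le> q" unfolding q_def using m0n xk by (intro mult_left_mono) auto
      finally show ?thesis .
    qed
    have b0: "0 \<le> 1 - 2 * real m0 / real n" using m0n npos by (simp add: field_simps)
    have "1 + real m0 * (- (2 * real m0 / real n)) \<le> (1 + - (2 * real m0 / real n)) ^ m0"
      by (rule Bernoulli_inequality) (use b0 in simp)
    moreover have "real m0 * (2 * real m0 / real n) \<le> 1/2"
    proof -
      have "4 * real m0 * real m0 \<le> real n" using m0sq by (metis of_nat_le_iff of_nat_mult of_nat_numeral)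
      then show ?thesis using npos by (simp add: field_simps)
    qed
    moreover have "(1 - 2 * real m0 / real n) ^ m0 \<le> q ^ m0" using a b0 by (rule power_mono)
    ultimately show ?thesis by simp
  qed
  define S1 where "S1 = (\<Sum>m\<in>{0..<m0}. ee n x m)"
  define R where "R = (\<Sum>m\<in>{m0..<Suc n}. ee n x m)"
  have S2: "S1 / 2 \<le> (\<Sum>m\<in>{m0..<2*m0}. ee n x m)"
  proof -
    have "(\<Sum>m\<in>{m0..<2*m0}. ee n x m) = (\<Sum>m\<in>{0 + m0..<m0 + m0}. ee n x m)" by (simp add: mult_2)
    also have "\<dots> = (\<Sum>m\<in>{0..<m0}. ee n x (m + m0))" by (rule sum.shift_bounds_nat_ivl)
    also have "\<dots> \<ge> (\<Sum>m\<in>{0..<m0}. ee n x m / 2)"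
    proof (rule sum_mono)
      fix m assume "m \<in> {0..<m0}"
      then have "ee n x m * q ^ m0 \<le> ee n x (m + m0)" using grow[of m m0] by simp
      moreover have "ee n x m / 2 \<le> ee n x m * q ^ m0" 
      proof -
        have "ee n x m * (1/2) \<le> ee n x m * q ^ m0" using qhalf nn[of m] by (rule mult_left_mono)
        then show ?thesis by simp
      qed
      ultimately show "ee n x m / 2 \<le> ee n x (m + m0)" by linarith
    qed
    finally show ?thesis unfolding S1_def by (simp add: sum_divide_distrib)
  qed
  have S2R: "(\<Sum>m\<in>{m0..<2*m0}. ee n x m) \<le> R" unfolding R_def
    using m0n by (intro sum_mono2) (auto simp: nn)
  have split: "(\<Sum>m\<in>{0..<Suc n}. f m) = (\<Sum>m\<in>{0..<m0}. f m) + (\<Sum>m\<in>{m0..<Suc n}. f m)" for f :: "nat \<Rightarrow> real"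
    using m0n by (intro sum.atLeastLessThan_concat[symmetric]) auto
  have T: "(\<Sum>m\<in>{0..<Suc n}. ee n x m) = S1 + R" unfolding S1_def R_def by (rule split)
  have W: "(\<Sum>m\<in>{0..<Suc n}. ee n x m * (if k+3 \<le> m then 1/4 else 1)) = S1 + R / 4"
  proof -
    have "(\<Sum>m\<in>{0..<m0}. ee n x m * (if k+3 \<le> m then 1/4 else 1)) = S1"
      unfolding S1_def m0_def by (intro sum.cong) auto
    moreover have "(\<Sum>m\<in>{m0..<Suc n}. ee n x m * (if k+3 \<le> m then 1/4 else 1)) = R / 4"
      unfolding R_def m0_def sum_divide_distrib by (intro sum.cong) auto
    ultimately show ?thesis by (subst split) (simp only:)
  qed
  have "S1 \<le> 2 * R" using S2 S2R by linarith
  then show ?thesis unfolding W T by (simp add: field_simps)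
qed



lemma hamming_le_card:
  assumes "\<pi> permutes X" "finite X"
  shows "hamming_id n \<pi> \<le> card X"
  unfolding hamming_id_def using assms permutes_not_in[OF assms(1)] by (intro card_mono) auto

lemma count_le: "finite X \<Longrightarrow> card {\<pi>. \<pi> permutes X \<and> Q \<pi>} \<le> fact (card X)"
  using card_mono[OF finite_permutations[of X], of "{\<pi>. \<pi> permutes X \<and> Q \<pi>}"] card_permutations[OF refl, of X]
  by auto

lemma count_big:
  assumes "finite X"
  shows "real (card {\<pi>. \<pi> permutes X \<and> k \<le> hamming_id n \<pi>}) \<le> (if k \<le> card X then fact (card X) else 0)"
proof (cases "k \<le> card X")
  case True
  have "real (card {\<pi>. \<pi> permutes X \<and> k \<le> hamming_id n \<pi>}) \<le> real (fact (card X))"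
    using count_le[OF assms, of "\<lambda>\<pi>. k \<le> hamming_id n \<pi>"] by (simp only: of_nat_le_iff)
  then show ?thesis using True by simp
next
  case False
  have e: "{\<pi>. \<pi> permutes X \<and> k \<le> hamming_id n \<pi>} = {}"
    using hamming_le_card[OF _ assms, of _ n] False by fastforce
  show ?thesis using False by (simp only: e) simp
qed

lemma count_small:
  assumes X: "X \<subseteq> {1..n}" and k: "2 \<le> k" and c: "k + 3 \<le> card X"
  shows "4 * card {\<pi>. \<pi> permutes X \<and> hamming_id n \<pi> < k} \<le> fact (card X)"
proof -
  have fX: "finite X" using X finite_subset by blast
  let ?K = "{B. B \<subseteq> X \<and> card B = k - 1}"
  have sub: "{\<pi>. \<pi> permutes X \<and> hamming_id n \<pi> < k} \<subseteq> (\<Union>B\<in>?K. {\<pi>. \<pi> permutes B})"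
  proof
    fix \<pi> assume "\<pi> \<in> {\<pi>. \<pi> permutes X \<and> hamming_id n \<pi> < k}"
    then have p: "\<pi> permutes X" and h: "hamming_id n \<pi> < k" by auto
    let ?M = "{i\<in>{1..n}. \<pi> i \<noteq> i}"
    have MX: "?M \<subseteq> X" using permutes_not_in[OF p] by auto
    have cM: "card ?M \<le> k - 1" using h unfolding hamming_id_def by simp
    obtain B where B: "?M \<subseteq> B" "B \<subseteq> X" "card B = k - 1"
      using exists_subset_between[OF cM _ MX fX] c by (metis add_leD1 le_diff_conv le_add1 order_trans)
    have "\<pi> permutes B"
      by (rule permutes_superset[OF p]) (use B X in force)
    then show "\<pi> \<in> (\<Union>B\<in>?K. {\<pi>. \<pi> permutes B})" using B by auto
  qed
  have fK: "finite ?K" using fX by simp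
  have "card {\<pi>. \<pi> permutes X \<and> hamming_id n \<pi> < k} \<le> card (\<Union>B\<in>?K. {\<pi>. \<pi> permutes B})"
    using fK fX by (intro card_mono[OF _ sub]) (auto intro!: finite_permutations intro: finite_subset)
  also have "\<dots> \<le> (\<Sum>B\<in>?K. card {\<pi>. \<pi> permutes B})" by (rule card_UN_le[OF fK])
  also have "\<dots> = (\<Sum>B\<in>?K. fact (k - 1))"
    by (rule sum.cong[OF refl]) (auto intro!: card_permutations intro: finite_subset[OF _ fX])
  also have "\<dots> = (card X choose (k - 1)) * fact (k - 1)" using n_subsets[OF fX] by simp
  finally have a: "card {\<pi>. \<pi> permutes X \<and> hamming_id n \<pi> < k} \<le> (card X choose (k - 1)) * fact (k - 1)" .
  have f4: "4 \<le> (fact (card X - (k - 1)) :: nat)"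
  proof -
    have "4 \<le> card X - (k - 1)" using c k by arith
    then show ?thesis using fact_ge_self[of "card X - (k - 1)"] by linarith
  qed
  have eq: "fact (k - 1) * fact (card X - (k - 1)) * (card X choose (k - 1)) = fact (card X)"
    using c by (intro binomial_fact_lemma) auto
  have "4 * ((card X choose (k - 1)) * fact (k - 1)) \<le> fact (card X - (k - 1)) * ((card X choose (k - 1)) * fact (k - 1))"
    using f4 by (rule mult_le_mono1)
  also have "\<dots> = fact (card X)" using eq by (simp only: ac_simps)
  finally have "4 * ((card X choose (k - 1)) * fact (k - 1)) \<le> fact (card X)" .
  then show ?thesis using a by linarith
qed



lemma exp_weight: "exp (- \<gamma> * real h) = exp (- \<gamma>) ^ h"
  by (simp add: exp_of_nat_mult[symmetric] mult.commute)

lemma atMost_as: "{..n} = {0..<Suc n}" by auto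

lemma Z_eq:
  "(\<Sum>\<pi>\<in>{\<pi>. \<pi> permutes {1..n}}. (x::real) ^ hamming_id n \<pi>) = (\<Sum>m\<in>{0..<Suc n}. ee n x m)"
proof -
  have "(\<Sum>\<pi>\<in>{\<pi>. \<pi> permutes {1..n}}. x ^ hamming_id n \<pi>) =
     (\<Sum>X\<in>Pow {1..n}. x ^ card X * (1-x)^(n - card X) * real (card {\<pi>. \<pi> permutes X}))"
    using decomp[of x n "\<lambda>_. True"] by simp
  also have "\<dots> = (\<Sum>X\<in>Pow {1..n}. (\<lambda>m. x ^ m * (1-x)^(n - m) * fact m) (card X))"
  proof (rule sum.cong[OF refl])
    fix X assume "X \<in> Pow {1..n}"
    then have "finite X" by (auto intro: finite_subset)
    then show "x ^ card X * (1-x)^(n - card X) * real (card {\<pi>. \<pi> permutes X}) = (\<lambda>m. x ^ m * (1-x)^(n - m) * fact m) (card X)"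
      by (simp add: card_permutations)
  qed
  also have "\<dots> = (\<Sum>m\<le>n. real (n choose m) * (x ^ m * (1-x)^(n - m) * fact m))"
    using sum_Pow_card[of "{1..n}"] by simp
  also have "\<dots> = (\<Sum>m\<in>{0..<Suc n}. ee n x m)"
    unfolding atMost_as ee_def by (rule sum.cong) (auto simp: algebra_simps)
  finally show ?thesis .
qed

lemma N_le:
  assumes x0: "0 \<le> x" and x1: "x \<le> 1" and k: "k \<le> Suc n"
  shows "(\<Sum>\<pi>\<in>{\<pi>. \<pi> permutes {1..n} \<and> k \<le> hamming_id n \<pi>}. (x::real) ^ hamming_id n \<pi>) \<le> (\<Sum>m\<in>{k..<Suc n}. ee n x m)"
proof -
  have "(\<Sum>\<pi>\<in>{\<pi>. \<pi> permutes {1..n} \<and> k \<le> hamming_id n \<pi>}. x ^ hamming_id n \<pi>) =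
     (\<Sum>X\<in>Pow {1..n}. x ^ card X * (1-x)^(n - card X) * real (card {\<pi>. \<pi> permutes X \<and> k \<le> hamming_id n \<pi>}))"
    by (rule decomp)
  also have "\<dots> \<le> (\<Sum>X\<in>Pow {1..n}. (\<lambda>m. x ^ m * (1-x)^(n - m) * (if k \<le> m then fact m else 0)) (card X))"
  proof (rule sum_mono)
    fix X assume "X \<in> Pow {1..n}"
    then have "finite X" by (auto intro: finite_subset)
    then show "x ^ card X * (1-x)^(n - card X) * real (card {\<pi>. \<pi> permutes X \<and> k \<le> hamming_id n \<pi>}) \<le> (\<lambda>m. x ^ m * (1-x)^(n - m) * (if k \<le> m then fact m else 0)) (card X)"
      using x0 x1 by (intro mult_left_mono count_big, auto)
  qed
  also have "\<dots> = (\<Sum>m\<le>n. real (n choose m) * (x ^ m * (1-x)^(n - m) * (if k \<le> m then fact m else 0)))"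
    using sum_Pow_card[of "{1..n}"] by simp
  also have "\<dots> = (\<Sum>m\<in>{0..<Suc n}. if k \<le> m then ee n x m else 0)"
    unfolding atMost_as ee_def by (rule sum.cong) (auto simp: algebra_simps)
  also have "\<dots> = (\<Sum>m\<in>{0..<k}. if k \<le> m then ee n x m else 0) + (\<Sum>m\<in>{k..<Suc n}. if k \<le> m then ee n x m else 0)"
    using k by (intro sum.atLeastLessThan_concat[symmetric]) auto
  also have "\<dots> = (\<Sum>m\<in>{k..<Suc n}. ee n x m)" by simp
  finally show ?thesis .
qed

lemma L_le:
  assumes x0: "0 \<le> x" and x1: "x \<le> 1" and k: "2 \<le> k"
  shows "(\<Sum>\<pi>\<in>{\<pi>. \<pi> permutes {1..n} \<and> hamming_id n \<pi> < k}. (x::real) ^ hamming_id n \<pi>)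
     \<le> (\<Sum>m\<in>{0..<Suc n}. ee n x m * (if k+3 \<le> m then 1/4 else 1))"
proof -
  have "(\<Sum>\<pi>\<in>{\<pi>. \<pi> permutes {1..n} \<and> hamming_id n \<pi> < k}. x ^ hamming_id n \<pi>) =
     (\<Sum>X\<in>Pow {1..n}. x ^ card X * (1-x)^(n - card X) * real (card {\<pi>. \<pi> permutes X \<and> hamming_id n \<pi> < k}))"
    by (rule decomp)
  also have "\<dots> \<le> (\<Sum>X\<in>Pow {1..n}. (\<lambda>m. x ^ m * (1-x)^(n - m) * (fact m * (if k+3 \<le> m then 1/4 else 1))) (card X))"
  proof (rule sum_mono)
    fix X assume X: "X \<in> Pow {1..n}"
    then have fX: "finite X" by (auto intro: finite_subset)
    have "real (card {\<pi>. \<pi> permutes X \<and> hamming_id n \<pi> < k}) \<le> fact (card X) * (if k+3 \<le> card X then 1/4 else 1)"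
    proof (cases "k + 3 \<le> card X")
      case True
      have "4 * card {\<pi>. \<pi> permutes X \<and> hamming_id n \<pi> < k} \<le> fact (card X)"
        using count_small[of X n k] X k True by auto
      then have "real (4 * card {\<pi>. \<pi> permutes X \<and> hamming_id n \<pi> < k}) \<le> real (fact (card X))"
        by (simp only: of_nat_le_iff)
      then show ?thesis using True by simp
    next
      case False
      have "real (card {\<pi>. \<pi> permutes X \<and> hamming_id n \<pi> < k}) \<le> real (fact (card X))"
        using count_le[OF fX, of "\<lambda>\<pi>. hamming_id n \<pi> < k"] by (simp only: of_nat_le_iff)
      then show ?thesis using False by simp
    qed
    then show "x ^ card X * (1-x)^(n - card X) * real (card {\<pi>. \<pi> permutes X \<and> hamming_id n \<pi> < k}) \<le> (\<lambda>m. x ^ m * (1-x)^(n - m) * (fact m * (if k+3 \<le> m then 1/4 else 1))) (card X)"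
      using x0 x1 by (intro mult_left_mono, auto)
  qed
  also have "\<dots> = (\<Sum>m\<le>n. real (n choose m) * (x ^ m * (1-x)^(n - m) * (fact m * (if k+3 \<le> m then 1/4 else 1))))"
    using sum_Pow_card[of "{1..n}"] by simp
  also have "\<dots> = (\<Sum>m\<in>{0..<Suc n}. ee n x m * (if k+3 \<le> m then 1/4 else 1))"
    unfolding atMost_as ee_def by (rule sum.cong) (auto simp: algebra_simps)
  finally show ?thesis .
qed



lemma Z_pos: "0 \<le> x \<Longrightarrow> x < 1 \<Longrightarrow> 0 < (\<Sum>m\<in>{0..<Suc n}. ee n (x::real) m)"
proof -
  assume a: "0 \<le> x" "x < 1"
  have "ee n x 0 \<le> (\<Sum>m\<in>{0..<Suc n}. ee n x m)"
    by (rule member_le_sum) (use a ee_nonneg in auto)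
  moreover have "0 < ee n x 0" using a by (simp add: ee_def)
  ultimately show ?thesis by linarith
qed

lemma prob_eq:
  "hamming_tail_prob n \<gamma> k =
    (\<Sum>\<pi>\<in>{\<pi>. \<pi> permutes {1..n} \<and> k \<le> hamming_id n \<pi>}. exp (-\<gamma>) ^ hamming_id n \<pi>) /
    (\<Sum>m\<in>{0..<Suc n}. ee n (exp (-\<gamma>)) m)"
  unfolding hamming_tail_prob_def exp_weight Z_eq ..

lemma part_i:
  assumes n: "3 \<le> n" and k: "2 \<le> k" "k < n" and g: "0 < \<gamma>" and d: "0 < \<delta>"
    and gd: "(1 + \<delta>) * ln (real n) \<le> \<gamma>"
  shows "hamming_tail_prob n \<gamma> k \<le> exp (- real k * \<delta> * ln (real n))"
proof -
  define x where "x = exp (-\<gamma>)"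
  define \<epsilon> where "\<epsilon> = exp (-(\<delta> * ln (real n)))"
  have x0: "0 < x" and x1: "x < 1" using g by (auto simp: x_def)
  have lnpos: "0 < ln (real n)" using n by simp
  have e1: "\<epsilon> < 1" unfolding \<epsilon>_def using d lnpos by simp
  have nx: "real n * x \<le> \<epsilon>"
  proof -
    have "real n * x = exp (ln (real n) - \<gamma>)" unfolding x_def using n by (simp add: exp_diff exp_minus field_simps)
    also have "\<dots> \<le> \<epsilon>" unfolding \<epsilon>_def using gd by (simp add: algebra_simps)
    finally show ?thesis .
  qed
  define Z where "Z = (\<Sum>m\<in>{0..<Suc n}. ee n x m)"
  have Zp: "0 < Z" unfolding Z_def using Z_pos x0 x1 by simp
  have "(\<Sum>\<pi>\<in>{\<pi>. \<pi> permutes {1..n} \<and> k \<le> hamming_id n \<pi>}. x ^ hamming_id n \<pi>) \<le> (\<Sum>m\<in>{k..<Suc n}. ee n x m)"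
    using x0 x1 k by (intro N_le) auto
  also have "\<dots> \<le> \<epsilon>^k * Z" unfolding Z_def using x0 x1 nx e1 k n by (intro tail_i) auto
  finally have "hamming_tail_prob n \<gamma> k \<le> \<epsilon>^k * Z / Z"
    unfolding prob_eq x_def[symmetric] Z_def[symmetric] using Zp by (intro divide_right_mono) auto
  also have "\<dots> = \<epsilon>^k" using Zp by simp
  also have "\<dots> = exp (- real k * \<delta> * ln (real n))" unfolding \<epsilon>_def
    by (simp add: exp_of_nat_mult[symmetric])
  finally show ?thesis .
qed

lemma part_ii:
  assumes n: "3 \<le> n" and k: "2 \<le> k" "k < n" and g: "0 < \<gamma>" and big: "4 * (k+3)^2 \<le> n"
    and gl: "\<gamma> \<le> ln (real (n - k))"
  shows "1/4 \<le> hamming_tail_prob n \<gamma> k"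
proof -
  define x where "x = exp (-\<gamma>)"
  have x0: "0 < x" and x1: "x < 1" using g by (auto simp: x_def)
  have xk: "1 / (real n - real k) \<le> x"
  proof -
    have nk: "0 < real (n - k)" using k by simp
    have "1 / (real n - real k) = exp (- ln (real (n - k)))" using nk k by (simp add: exp_minus of_nat_diff divide_inverse)
    also have "\<dots> \<le> x" unfolding x_def using gl by simp
    finally show ?thesis .
  qed
  define Z where "Z = (\<Sum>m\<in>{0..<Suc n}. ee n x m)"
  define N where "N = (\<Sum>\<pi>\<in>{\<pi>. \<pi> permutes {1..n} \<and> k \<le> hamming_id n \<pi>}. x ^ hamming_id n \<pi>)"
  define L where "L = (\<Sum>\<pi>\<in>{\<pi>. \<pi> permutes {1..n} \<and> hamming_id n \<pi> < k}. x ^ hamming_id n \<pi>)"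
  have Zp: "0 < Z" unfolding Z_def using Z_pos x0 x1 by simp
  have ZNL: "Z = N + L"
  proof -
    have fin: "finite {\<pi>. \<pi> permutes {1..n::nat}}" by (rule finite_permutations) simp
    have u: "{\<pi>. \<pi> permutes {1..n}} = {\<pi>. \<pi> permutes {1..n} \<and> k \<le> hamming_id n \<pi>} \<union> {\<pi>. \<pi> permutes {1..n} \<and> hamming_id n \<pi> < k}"
      by auto
    have "Z = (\<Sum>\<pi>\<in>{\<pi>. \<pi> permutes {1..n}}. x ^ hamming_id n \<pi>)" unfolding Z_def Z_eq ..
    also have "\<dots> = N + L" unfolding N_def L_def u
      by (rule sum.union_disjoint) (auto intro: finite_subset[OF _ fin])
    finally show ?thesis .
  qed
  have "L \<le> (\<Sum>m\<in>{0..<Suc n}. ee n x m * (if k+3 \<le> m then 1/4 else 1))"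
    unfolding L_def using x0 x1 k by (intro L_le) auto
  also have "\<dots> \<le> 3/4 * Z" unfolding Z_def using x1 xk k big by (intro tail_ii) auto
  finally have "Z / 4 \<le> N" using ZNL by linarith
  then have "1/4 \<le> N / Z" using Zp by (simp add: field_simps)
  then show ?thesis unfolding prob_eq x_def[symmetric] Z_def[symmetric] N_def[symmetric] .
qed

lemma prob_nonneg: "0 \<le> hamming_tail_prob n \<gamma> k"
  unfolding hamming_tail_prob_def by (intro divide_nonneg_nonneg sum_nonneg) auto

lemma derange_le: "real (derangements_count k) \<le> fact k"
proof -
  have "derangements_count k \<le> card {p. p permutes {1..k}}"
    unfolding derangements_count_def by (intro card_mono) (auto intro: finite_permutations)
  also have "\<dots> = fact k" by (rule card_permutations) auto
  finally show ?thesis by (metis of_nat_fact of_nat_le_iff)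
qed

theorem proposition1:
  shows "(\<forall>n k \<gamma> \<delta>. n \<ge> 3 \<longrightarrow> 2 \<le> k \<longrightarrow> k < n \<longrightarrow> \<gamma> > 0 \<longrightarrow> \<delta> > 0 \<longrightarrow>
            \<gamma> \<ge> (1 + \<delta>) * ln (real n) \<longrightarrow>
            hamming_tail_prob n \<gamma> k \<le> exp (- real k * \<delta> * ln (real n)))
   \<and> (\<exists>c :: nat \<Rightarrow> nat \<Rightarrow> real.
        (\<forall>k \<ge> 2. (\<lambda>n. c k n) \<longlonglongrightarrow> (1/4) * (real (derangements_count k) / fact k))
      \<and> (\<forall>n k \<gamma>. n \<ge> 3 \<longrightarrow> 2 \<le> k \<longrightarrow> k < n \<longrightarrow> \<gamma> > 0 \<longrightarrow>
            \<gamma> \<le> ln (real (n - k)) \<longrightarrow> hamming_tail_prob n \<gamma> k \<ge> c k n))"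
proof (intro conjI allI impI)
  fix n k :: nat and \<gamma> \<delta> :: real
  assume "n \<ge> 3" "2 \<le> k" "k < n" "\<gamma> > 0" "\<delta> > 0" "\<gamma> \<ge> (1 + \<delta>) * ln (real n)"
  then show "hamming_tail_prob n \<gamma> k \<le> exp (- real k * \<delta> * ln (real n))" by (intro part_i) auto
next
  define c where "c k n = (if 4 * (k+3)^2 \<le> n then (1/4) * (real (derangements_count k) / fact k) else (0::real))" for k n :: nat
  show "\<exists>c :: nat \<Rightarrow> nat \<Rightarrow> real.
        (\<forall>k \<ge> 2. (\<lambda>n. c k n) \<longlonglongrightarrow> (1/4) * (real (derangements_count k) / fact k))
      \<and> (\<forall>n k \<gamma>. n \<ge> 3 \<longrightarrow> 2 \<le> k \<longrightarrow> k < n \<longrightarrow> \<gamma> > 0 \<longrightarrow>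
            \<gamma> \<le> ln (real (n - k)) \<longrightarrow> hamming_tail_prob n \<gamma> k \<ge> c k n)"
  proof (intro exI[of _ c] conjI allI impI)
    fix k :: nat assume "2 \<le> k"
    have "eventually (\<lambda>n. c k n = (1/4) * (real (derangements_count k) / fact k)) sequentially"
      unfolding c_def eventually_sequentially by (intro exI[of _ "4 * (k+3)^2"]) auto
    then show "(\<lambda>n. c k n) \<longlonglongrightarrow> (1/4) * (real (derangements_count k) / fact k)"
      by (rule tendsto_eventually)
  next
    fix n k :: nat and \<gamma> :: real
    assume a: "n \<ge> 3" "2 \<le> k" "k < n" "\<gamma> > 0" "\<gamma> \<le> ln (real (n - k))"
    show "c k n \<le> hamming_tail_prob n \<gamma> k"
    proof (cases "4 * (k+3)^2 \<le> n")
      case True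
      have "real (derangements_count k) / fact k \<le> 1" using derange_le[of k] by simp
      then have "c k n \<le> 1/4" unfolding c_def using True by simp
      also have "\<dots> \<le> hamming_tail_prob n \<gamma> k" using a True by (intro part_ii) auto
      finally show ?thesis .
    next
      case False
      then show ?thesis unfolding c_def using prob_nonneg by simp
    qed
  qed
qed

end
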